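(* Let $p$ be a prime, $m,n\ge0$ integers and $a,b,c,d\ge0$ integers (assumed positive if $p=2$). (1) If $p^m\frac{p^a+1}{p^b+1}=p^n\frac{p^c+1}{p^d+1}\in\mathbb Z_{>0}$, then $m=n$ and either ($a=b$ and $c=d$) or ($a=c$ and $b=d$). (2) If $p^m\frac{p^a-1}{p^b+1}=p^n\frac{p^c-1}{p^d+1}\in\mathbb Z_{>0}$, then $m=n$, $a=c$ and $b=d$. (3) If $p^m\frac{p^a+1}{p^b+1}=p^n\frac{p^c-1}{p^d+1}\in\mathbb Z_{>0}$, then $m=n$ and either $p=2$ and ($a=b$, $c=2$, $d=1$, or $(a,b,c,d)=(3,1,4,2)$), or $p=3$ and ($a=b$, $c=1$, $d=0$, or $(a,b,c,d)=(1,0,2,1)$). (4) If $p^m(p^a+1)=p^n\frac{p^c+1}{p^d+1}\in\mathbb Z_{>0}$, then $m=n$ and either $p=3$ and $(a,c,d)=(0,1,0)$, or $p=2$ and $(a,c,d)=(1,3,1)$. (5) If $p^m(p^a+1)=p^n\frac{p^c-1}{p^d+1}\in\mathbb Z_{>0}$, then $m=n$ and either $p=5$ and $(a,c,d)=(0,1,0)$, or $p=3$ and $(a,c,d)\in\{(0,2,1),(1,2,0)\}$, or $p=2$ and $(a,c,d)\in\{(1,4,2),(2,4,1)\}$. *)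

theory Defs
  imports Complex_Main "HOL-Computational_Algebra.Primes"
begin

end

theory Submission
  imports Defs
begin


lemma not_dvd_one_plus:
  fixes p X Y :: nat assumes "p \<ge> 2" "p * X + 1 = p * Y" shows False
proof -
  have "(p*X+1) mod p = 1" using assms(1) by (simp add: mod_Suc)
  moreover have "(p*Y) mod p = 0" by simp
  ultimately show False using assms(2) by simp
qed

lemma coprime_pow_plus1:
  fixes p a :: nat assumes "prime p" "a \<ge> 1 \<or> p \<noteq> 2" shows "\<not> p dvd p^a + 1"
proof
  assume h: "p dvd p^a + 1"
  show False
  proof (cases "a \<ge> 1")
    case True
    then have "p dvd p^a" by (simp add: dvd_power)
    with h have "p dvd 1" using dvd_add_right_iff by blast
    then show False using assms(1) by simp
  next
    case False
    then have "a = 0" by simp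
    with h have "p dvd 2" by (simp add: numeral_2_eq_2)
    then have "p \<le> 2" by (simp add: dvd_imp_le)
    moreover have "p \<ge> 2" using assms(1) prime_ge_2_nat by blast
    ultimately show False using assms False by simp
  qed
qed

lemma coprime_pow_minus1:
  fixes p a :: nat assumes "prime p" "a \<ge> 1" shows "\<not> p dvd p^a - 1"
proof
  assume h: "p dvd p^a - 1"
  have "p dvd p^a" using assms(2) by (simp add: dvd_power)
  then have "p dvd p^a - (p^a - 1)" using h dvd_diff_nat by blast
  moreover have "p^a > 0" using assms prime_gt_0_nat by simp
  then have "p^a - (p^a - 1) = 1" by linarith
  ultimately show False using assms(1) by simp
qed

lemma exp_eq:
  fixes p m n X Y :: nat assumes "prime p" "p^m * X = p^n * Y" "\<not> p dvd X" "\<not> p dvd Y"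
  shows "m = n"
proof -
  have p0: "p > 0" using assms(1) prime_gt_0_nat by blast
  have *: False if "p^m * X = p^n * Y" "\<not> p dvd X" "m < n" for m n X Y
  proof -
    have "p^n = p^m * p^(n-m)" using that(3) by (simp add: power_add[symmetric])
    then have "X = p^(n-m) * Y" using that(1) p0 by simp
    then have "p dvd X" using that(3) by (simp add: dvd_power)
    then show False using that(2) by simp
  qed
  show ?thesis using *[of m X n Y] *[of n Y m X] assms by (metis linorder_neqE_nat)
qed

lemma conv:
  fixes p A B C D m n :: nat assumes "B > 0" "D > 0"
    "real p^m * (real A / real B) = real p^n * (real C / real D)"
  shows "p^m*A*D = p^n*C*B"
proof -
  have "real p^m * real A * real D = real p^n * real C * real B"
    using assms by (simp add: field_simps)
  then show ?thesis by (metis of_nat_eq_iff of_nat_mult of_nat_power)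
qed

lemma intdiv:
  fixes p A B m :: nat assumes "prime p" "\<not> p dvd B" "B > 0"
    "real p^m * (real A / real B) \<in> \<int>"
  shows "B dvd A"
proof -
  obtain k where k: "real p^m * (real A / real B) = of_int k" using assms(4) Ints_cases by blast
  then have "real (p^m * A) = of_int k * real B" using assms(3) by (simp add: field_simps)
  then have "int (p^m * A) = k * int B" by (metis of_int_eq_iff of_int_mult of_int_of_nat_eq)
  then have "int B dvd int (p^m * A)" by simp
  then have "B dvd p^m * A" by (simp only: of_nat_dvd_iff)
  moreover have "coprime B (p^m)"
    using assms(1,2) by (metis coprime_commute prime_imp_coprime coprime_power_right_iff)
  ultimately show ?thesis using coprime_dvd_mult_right_iff by blast
qed

lemma H1: fixes p X k :: nat assumes "p \<ge> 2" "p*X + 1 = p^k" shows "X = 0 \<and> k = 0"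
proof (cases k)
  case 0 then show ?thesis using assms by simp
next
  case (Suc k') then have "p*X+1 = p*p^k'" using assms by simp
  then show ?thesis using not_dvd_one_plus assms(1) by blast
qed

lemma dvd_small: fixes p q :: nat assumes "prime p" "p dvd q" "q \<in> {1,2,3,5}" shows "p = q"
proof -
  have "p \<le> q" using assms by (auto intro: dvd_imp_le)
  moreover have "p \<ge> 2" using assms(1) prime_ge_2_nat by blast
  moreover have "q \<le> 5" using assms(3) by auto
  ultimately have "p = 2 \<or> p = 3 \<or> p = 4 \<or> p = 5" by linarith
  then show ?thesis using assms(2,3) by auto
qed

lemma cancelP: fixes P X Y :: nat assumes "P > 0" "P*X = P*Y" shows "X = Y"
  using assms by simp

lemma pow_split: fixes p a d :: nat assumes "a < d" shows "p^d = p^a * p * p^(d-a-1)"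
proof -
  have "d = a + 1 + (d-a-1)" using assms by simp
  then have "p^d = p^(a+1+(d-a-1))" by simp
  also have "\<dots> = p^a*p*p^(d-a-1)" by (simp add: power_add)
  finally show ?thesis .
qed

lemma core4':
  fixes p a c d :: nat
  assumes pr: "prime p" and p2: "p = 2 \<longrightarrow> 0 < a" and ad: "a \<le> d"
    and eq: "(p^a+1)*(p^d+1) = p^c+1"
  shows "(p=3 \<and> a=0 \<and> c=1 \<and> d=0) \<or> (p=2 \<and> a=1 \<and> c=3 \<and> d=1)"
proof -
  have pge: "p \<ge> 2" using pr prime_ge_2_nat by blast
  show ?thesis
  proof (cases "a = 0")
    case True
    then have e: "2*p^d + 1 = p^c" using eq by simp
    show ?thesis
    proof (cases "d = 0")
      case True
      then have "p^c = 3" using e by simp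
      then have "c \<noteq> 0" by (metis power_0 numeral_One numeral_eq_iff semiring_norm(86))
      then have "p dvd p^c" by simp
      then have "p dvd 3" using \<open>p^c = 3\<close> by simp
      then have "p = 3" using dvd_small pr by auto
      then have "c = 1" using \<open>p^c = 3\<close> by (metis power_one_right power_inject_exp one_less_numeral_iff semiring_norm(77))
      then show ?thesis using \<open>p=3\<close> True \<open>a=0\<close> by simp
    next
      case False
      then obtain d' where "d = Suc d'" by (cases d) auto
      then have "p*(2*p^d') + 1 = p^c" using e by (simp add: algebra_simps)
      then show ?thesis using H1 pge \<open>d = Suc d'\<close> by fastforce
    qed
  next
    case False
    define P where "P = p^a"
    have P0: "P > 0" using pge P_def by simp
    show ?thesis
    proof (cases "a < d")
      case True
      define k where "k = d - a - 1"
      have dk: "p^d = P*p*p^k" using True by (simp add: P_def k_def pow_split)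
      have "P*(p*p^k) > 0" using P0 pge by simp
      moreover have "P + (P*(p*p^k) + P*(P*(p*p^k))) = p^c" using eq unfolding P_def[symmetric] dk by (simp add: algebra_simps)
      ultimately have "P < p^c" by linarith
      then have "a < c" using pge P_def by (simp add: power_strict_increasing_iff)
      define j where "j = c - a - 1"
      have cj: "p^c = P*p*p^j" using \<open>a<c\<close> by (simp add: P_def j_def pow_split)
      have "P*(p*(P*p^k + p^k) + 1) = P*(p*p^j)" using eq unfolding P_def[symmetric] dk cj
        by (simp add: algebra_simps)
      then have "p*(P*p^k + p^k) + 1 = p*p^j" by (rule cancelP[OF P0])
      then show ?thesis using not_dvd_one_plus pge by blast
    next
      case False
      then have "a = d" using ad by simp
      have "P*P > 0" using P0 by simp
      moreover have "P*P + P + P + 1 = p^c+1" using eq unfolding P_def[symmetric] \<open>a=d\<close>[symmetric] by (simp add: algebra_simps)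
      ultimately have "P < p^c" by linarith
      then have "a < c" using pge P_def by (simp add: power_strict_increasing_iff)
      define j where "j = c - a - 1"
      have cj: "p^c = P*p*p^j" using \<open>a<c\<close> by (simp add: P_def j_def pow_split)
      obtain a' where a': "a = Suc a'" using \<open>a \<noteq> 0\<close> by (cases a) auto
      have Pa: "P = p*p^a'" using a' P_def by simp
      have "P*(P + 2) = P*(p*p^j)" using eq unfolding P_def[symmetric] \<open>a=d\<close>[symmetric] cj
        by (simp add: algebra_simps)
      then have "P + 2 = p*p^j" by (rule cancelP[OF P0])
      then have e2: "p*p^a' + 2 = p*p^j" using Pa by simp
      then have "p dvd 2" by (metis dvd_add_right_iff dvd_triv_left)
      then have "p = 2" using dvd_small pr by auto
      with e2 have e3: "2^a' + 1 = (2::nat)^j" by simp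
      show ?thesis
      proof (cases a')
        case 0
        then have "j = 1" using e3 by (metis one_add_one power_0 power_one_right power_inject_exp one_less_numeral_iff semiring_norm(76))
        then show ?thesis using 0 a' \<open>a=d\<close> \<open>p=2\<close> j_def \<open>a<c\<close> by simp
      next
        case (Suc a'')
        then have "2*2^a'' + 1 = (2::nat)^j" using e3 by simp
        then have False using H1[of 2 "2^a''" j] by simp
        then show ?thesis ..
      qed
    qed
  qed
qed

lemma core5':
  fixes p a c d :: nat
  assumes pr: "prime p" and p2: "p = 2 \<longrightarrow> 0 < a" and ad: "a \<le> d"
    and eq: "(p^a+1)*(p^d+1) + 1 = p^c"
  shows "(p=5 \<and> a=0 \<and> c=1 \<and> d=0) \<or> (p=3 \<and> a=0 \<and> c=2 \<and> d=1) \<or> (p=2 \<and> a=1 \<and> c=4 \<and> d=2)"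
proof -
  have pge: "p \<ge> 2" using pr prime_ge_2_nat by blast
  show ?thesis
  proof (cases "a = 0")
    case True
    then have e: "2*p^d + 3 = p^c" using eq by simp
    show ?thesis
    proof (cases "d = 0")
      case True
      then have c5: "p^c = 5" using e by simp
      then have "c \<noteq> 0" by (metis power_0 numeral_One numeral_eq_iff semiring_norm(86) semiring_norm(89))
      then have "p dvd p^c" by simp
      then have "p dvd 5" using c5 by simp
      then have "p = 5" using dvd_small pr by auto
      then have "c = 1" using c5 power_inject_exp[of "5::nat" c 1] by simp
      then show ?thesis using \<open>p=5\<close> True \<open>a=0\<close> by simp
    next
      case False
      then obtain d' where d': "d = Suc d'" by (cases d) auto
      have "c \<noteq> 0" proof assume "c = 0" with e show False by simp qed
      then obtain c' where c': "c = Suc c'" by (cases c) auto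
      have e2: "p*(2*p^d') + 3 = p*p^c'" using e d' c' by (simp add: algebra_simps)
      then have "p dvd 3" by (metis dvd_add_right_iff dvd_triv_left)
      then have "p = 3" using dvd_small pr by auto
      with e2 have e3: "2*3^d' + 1 = (3::nat)^c'" by simp
      show ?thesis
      proof (cases d')
        case 0
        then have "c' = 1" using e3 power_inject_exp[of "3::nat" c' 1] by simp
        then show ?thesis using 0 d' c' \<open>a=0\<close> \<open>p=3\<close> by simp
      next
        case (Suc d'')
        then have "3*(2*3^d'') + 1 = (3::nat)^c'" using e3 by simp
        then have False using H1[of 3 "2*3^d''" c'] by simp
        then show ?thesis ..
      qed
    qed
  next
    case False
    then obtain a' where a': "a = Suc a'" by (cases a) auto
    obtain d' where d': "d = Suc d'" using ad a' by (cases d) auto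
    define X where "X = p*p^a'*p^d' + p^a' + p^d'"
    have e: "p*X + 2 = p^c" using eq a' d' by (simp add: X_def algebra_simps)
    have "c \<noteq> 0" proof assume "c = 0" with e show False by simp qed
    then obtain c' where c': "c = Suc c'" by (cases c) auto
    have e2: "p*X + 2 = p*p^c'" using e c' by simp
    then have "p dvd 2" by (metis dvd_add_right_iff dvd_triv_left)
    then have "p = 2" using dvd_small pr by auto
    with e2 have e3: "X + 1 = 2^c'" by simp
    show ?thesis
    proof (cases a')
      case 0
      then have e4: "3*2^d' + 2 = (2::nat)^c'" using e3 \<open>p=2\<close> by (simp add: X_def)
      show ?thesis
      proof (cases d')
        case 0
        then have "2*2+1 = (2::nat)^c'" using e4 by simp
        then have False using H1[of 2 2 c'] by simp
        then show ?thesis ..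
      next
        case (Suc d2)
        show ?thesis
        proof (cases d2)
          case 0
          then have "c' = 3" using e4 Suc power_inject_exp[of "2::nat" c' 3] by simp
          then show ?thesis using 0 Suc d' c' a' \<open>a'=0\<close> \<open>p=2\<close> by simp
        next
          case (Suc d3)
          then have e5: "2*(6*2^d3+1) = (2::nat)^c'" using e4 \<open>d' = Suc d2\<close> by simp
          then have "c' \<noteq> 0" by (metis one_neq_zero power_0 mult_is_0 Suc_eq_plus1 nat_1_eq_mult_iff numeral_eq_one_iff semiring_norm(85) zero_neq_numeral)
          then obtain c'' where "c' = Suc c''" by (cases c') auto
          then have "2*(3*2^d3)+1 = (2::nat)^c''" using e5 by simp
          then have False using H1[of 2 "3*2^d3" c''] by simp
          then show ?thesis ..
        qed
      qed
    next
      case (Suc a'')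
      then obtain d'' where "d' = Suc d''" using ad a' d' by (cases d') auto
      then have "2*(2*2^a''*2*2^d'' + 2^a'' + 2^d'') + 1 = (2::nat)^c'"
        using e3 \<open>p=2\<close> Suc by (simp add: X_def algebra_simps)
      then have False using H1[of 2 _ c'] by fastforce
      then show ?thesis ..
    qed
  qed
qed

lemma pow_split_le: fixes p a d :: nat assumes "a \<le> d" shows "p^d = p^a * p^(d-a)"
  using assms by (metis le_add_diff_inverse power_add)

lemma D1:
  fixes p a b c d :: nat
  assumes pr: "prime p" and da: "d \<le> a" and bc: "b \<le> c" and db: "d < b"
    and eq: "(p^a+1)*(p^d+1) = (p^c+1)*(p^b+1)"
  shows False
proof -
  have pge: "p \<ge> 2" using pr prime_ge_2_nat by blast
  show False
  proof (cases "a = d")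
    case True
    have "p^d < p^b" using db pge by (simp add: power_strict_increasing_iff)
    then have "(p^d+1)*(p^d+1) < (p^b+1)*(p^b+1)" by (intro mult_strict_mono) simp_all
    also have "\<dots> \<le> (p^c+1)*(p^b+1)" using bc pge by (intro mult_le_mono) (simp_all add: power_increasing)
    finally show False using eq True by simp
  next
    case False
    define P where "P = p^d"
    have P0: "P > 0" using pge P_def by simp
    have "d < a" using False da by simp
    have ea: "p^a = P*p*p^(a-d-1)" using \<open>d<a\<close> by (simp add: P_def pow_split)
    have eb: "p^b = P*p*p^(b-d-1)" using db by (simp add: P_def pow_split)
    have ec: "p^c = P*p*p^(b-d-1)*p^(c-b)" using bc eb pow_split_le[OF bc, of p] by simp
    define i where "i = a-d-1"
    define k where "k = b-d-1"
    define j where "j = c-b"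
    have "P*(p*(P*p^i + p^i) + 1) + 1 = P*(p*(p^k*(P*p*p^k*p^j + p^j + 1))) + 1"
      using eq unfolding ea eb ec P_def[symmetric] i_def[symmetric] k_def[symmetric] j_def[symmetric]
      by (simp add: algebra_simps)
    then have "P*(p*(P*p^i + p^i) + 1) = P*(p*(p^k*(P*p*p^k*p^j + p^j + 1)))" by simp
    then have "p*(P*p^i + p^i) + 1 = p*(p^k*(P*p*p^k*p^j + p^j + 1))" by (rule cancelP[OF P0])
    then show False using not_dvd_one_plus pge by blast
  qed
qed

lemma core1':
  fixes p a b c d :: nat
  assumes pr: "prime p" and da: "d \<le> a" and bc: "b \<le> c"
    and eq: "(p^a+1)*(p^d+1) = (p^c+1)*(p^b+1)"
  shows "a = c \<and> b = d"
proof -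
  have pge: "p \<ge> 2" using pr prime_ge_2_nat by blast
  consider "d < b" | "b < d" | "b = d" by linarith
  then show ?thesis
  proof cases
    case 1 then show ?thesis using D1[OF pr da bc 1 eq] by simp
  next
    case 2 then show ?thesis using D1[OF pr bc da 2 eq[symmetric]] by simp
  next
    case 3
    then have "(p^b+1)*(p^a+1) = (p^b+1)*(p^c+1)" using eq by (simp only: mult.commute)
    then have "p^a + 1 = p^c + 1" by (rule cancelP[rotated]) simp
    then have "a = c" using pge by simp
    then show ?thesis using 3 by simp
  qed
qed

lemma L2:
  fixes p a b c d r :: nat
  assumes pr: "prime p" and r0: "r > 0" and ea: "p^a = r*(p^b+1)+1" and ec: "p^c = r*(p^d+1)+1"
    and bd: "b < d"
  shows False
proof -
  have pge: "p \<ge> 2" using pr prime_ge_2_nat by blast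
  have "p^b < p^d" using bd pge by (simp add: power_strict_increasing_iff)
  then have "r*p^b < r*p^d" using r0 by simp
  then have "p^a < p^c" using ea ec by (simp add: algebra_simps)
  then have ac: "a < c" using pge by (simp add: power_strict_increasing_iff)
  have "p^b < p^a" using ea r0
    by (metis add.commute add_mono_thms_linordered_field(1) le_add2 less_add_one mult_le_mono1 mult.left_neutral not_less order_le_less_trans less_one not_gr0)
  then have ba: "b < a" using pge by (simp add: power_strict_increasing_iff)
  define Q where "Q = p^(a-b)"
  define e where "e = d - b"
  define z where "z = c - a"
  have e1: "e \<ge> 1" using bd e_def by simp
  have ua: "p^a = p^b*Q" using pow_split_le[of b a p] ba Q_def by simp
  have wc: "p^c = p^b*Q*p^z" using pow_split_le[of a c p] ac z_def ua by simp
  have xd: "p^d = p^b*p^e" using pow_split_le[of b d p] bd e_def by simp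
  have "p^c + r*p^b = p^a + r*p^d" using ea ec by (simp add: algebra_simps)
  then have "p^b*(Q*p^z + r) = p^b*(Q + r*p^e)" unfolding ua wc xd by (simp add: algebra_simps)
  then have eq2: "Q*p^z + r = Q + r*p^e" by (rule cancelP[rotated]) (use pge in simp)
  have "int Q * (int (p^z) - 1) = int r * (int (p^e) - 1)"
    using arg_cong[OF eq2, of int] by (simp add: algebra_simps)
  moreover have "int (p^e) - 1 = int (p^e - 1)" using pge by (simp add: of_nat_diff)
  ultimately have "int Q dvd int (r * (p^e - 1))" by (metis dvd_triv_left of_nat_mult)
  then have "Q dvd r * (p^e - 1)" by (simp only: of_nat_dvd_iff)
  moreover have "coprime Q (p^e - 1)"
  proof -
    have "\<not> p dvd p^e - 1" using coprime_pow_minus1[OF pr e1] .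
    then have "coprime p (p^e - 1)" using pr by (simp add: prime_imp_coprime)
    then show ?thesis unfolding Q_def by (simp add: coprime_power_left_iff)
  qed
  ultimately have "Q dvd r" using coprime_dvd_mult_left_iff by blast
  then have "Q \<le> r" using r0 by (simp add: dvd_imp_le)
  then have h1: "Q*p^b \<le> r*p^b" by simp
  have h2: "Q*p^b = r*p^b + r + 1" using ea ua by (simp add: algebra_simps)
  from h1 h2 show False by linarith
qed

lemma powex: fixes q a k :: nat assumes "k \<le> a" shows "\<exists>A. q^a = q^k * A"
  using pow_split_le[OF assms] by blast

lemma dvdk: fixes p X Y k :: nat assumes "p*X + k = p*Y" shows "p dvd k"
  using assms by (metis dvd_add_right_iff dvd_triv_left)

lemma core3_p2:
  fixes a b c d r :: nat
  assumes pos: "0<a" "0<b" "0<c" "0<d" and r2: "r \<ge> 2"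
    and E1: "2^a + 1 = r*(2^b+1)" and E2: "2^c = r*(2^d+1) + 1"
    and ab: "b < a" and cd: "d < c"
  shows "a = 3 \<and> b = 1 \<and> c = 4 \<and> d = 2"
proof -
  consider "b = 1" | "b \<ge> 2 \<and> d = 1" | "b \<ge> 2 \<and> d \<ge> 2" using pos by linarith
  then show ?thesis
  proof cases
    case 1
    then have e1: "2^a + 1 = 3*r" using E1 by simp
    have "a \<ge> 2" using ab 1 by simp
    show ?thesis
    proof (cases "a = 2")
      case True then have "(2::nat)^2 + 1 = 3*r" using e1 by simp
      then have "5 = 3*r" by simp
      then show ?thesis by presburger
    next
      case False
      then have "a \<ge> 3" using \<open>a\<ge>2\<close> by simp
      obtain A where A: "(2::nat)^a = 2^3*A" using powex[OF \<open>a\<ge>3\<close>] by blast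
      have f1: "8*A + 1 = 3*r" using e1 A by simp
      consider "d = 1" | "d = 2" | "d \<ge> 3" using pos by linarith
      then show ?thesis
      proof cases
        case 1
        then have "c \<ge> 2" using cd by simp
        obtain C where C: "(2::nat)^c = 2^2*C" using powex[OF \<open>c\<ge>2\<close>] by blast
        have "4*C = 3*r + 1" using E2 C 1 by simp
        then show ?thesis using f1 by presburger
      next
        case 2
        then have e2: "2^c = 5*r + 1" using E2 by simp
        show ?thesis
        proof (cases "a = 3")
          case True
          then have "r = 3" using e1 by simp
          then have "(2::nat)^c = 2^4" using e2 by simp
          then have "c = 4" using power_inject_exp[of "2::nat" c 4] by simp
          then show ?thesis using True \<open>b=1\<close> 2 by simp
        next
          case False
          then have "a \<ge> 4" using \<open>a\<ge>3\<close> by simp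
          obtain A4 where A4: "(2::nat)^a = 2^4*A4" using powex[OF \<open>a\<ge>4\<close>] by blast
          have g1: "16*A4 + 1 = 3*r" using e1 A4 by simp
          show ?thesis
          proof (cases "c = 3")
            case True then have "8 = 5*r+1" using e2 by simp
            then show ?thesis by presburger
          next
            case False
            then have "c \<ge> 4" using cd 2 by simp
            obtain C where C: "(2::nat)^c = 2^4*C" using powex[OF \<open>c\<ge>4\<close>] by blast
            have "16*C = 5*r+1" using e2 C by simp
            then show ?thesis using g1 by presburger
          qed
        qed
      next
        case 3
        then have "c \<ge> 3" using cd by simp
        obtain D where D: "(2::nat)^d = 2^3*D" using powex[OF \<open>d\<ge>3\<close>] by blast
        obtain C where C: "(2::nat)^c = 2^3*C" using powex[OF \<open>c\<ge>3\<close>] by blast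
        define Y where "Y = r*D"
        have "8*C = 8*Y + r + 1" using E2 C D by (simp add: Y_def algebra_simps)
        then show ?thesis using f1 by presburger
      qed
    qed
  next
    case 2
    then have e2: "2^c = 3*r + 1" using E2 by simp
    show ?thesis
    proof (cases "b = 2")
      case True
      then have e1: "2^a + 1 = 5*r" using E1 by simp
      have "a \<ge> 3" using ab True by simp
      show ?thesis
      proof (cases "a = 3")
        case True then have "(2::nat)^2 + 1 = 3*r" using e1 by simp
      then have "5 = 3*r" by simp
      then show ?thesis by presburger
      next
        case False
        then have "a \<ge> 4" using \<open>a\<ge>3\<close> by simp
        obtain A4 where A4: "(2::nat)^a = 2^4*A4" using powex[OF \<open>a\<ge>4\<close>] by blast
        have g1: "16*A4 + 1 = 5*r" using e1 A4 by simp
        consider "c = 2" | "c = 3" | "c \<ge> 4" using cd 2 by linarith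
        then show ?thesis
        proof cases
          case 1 then show ?thesis using e2 r2 by simp
        next
          case 2 then have "8 = 3*r+1" using e2 by simp
          then show ?thesis by presburger
        next
          case 3
          obtain C where C: "(2::nat)^c = 2^4*C" using powex[OF 3] by blast
          have "16*C = 3*r+1" using e2 C by simp
          then show ?thesis using g1 by presburger
        qed
      qed
    next
      case False
      then have "b \<ge> 3" using 2 by simp
      then have "a \<ge> 3" using ab by simp
      obtain B where B: "(2::nat)^b = 2^3*B" using powex[OF \<open>b\<ge>3\<close>] by blast
      obtain A where A: "(2::nat)^a = 2^3*A" using powex[OF \<open>a\<ge>3\<close>] by blast
      define X where "X = r*B"
      have g1: "8*A + 1 = 8*X + r" using E1 A B by (simp add: X_def algebra_simps)
      consider "c = 2" | "c \<ge> 3" using cd 2 by linarith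
      then show ?thesis
      proof cases
        case 1 then show ?thesis using e2 r2 by simp
      next
        case 2
        obtain C where C: "(2::nat)^c = 2^3*C" using powex[OF 2] by blast
        have "8*C = 3*r+1" using e2 C by simp
        then show ?thesis using g1 by presburger
      qed
    qed
  next
    case 3
    then have "a \<ge> 2" "c \<ge> 2" using ab cd by auto
    obtain B where B: "(2::nat)^b = 2^2*B" using powex 3 by blast
    obtain D where D: "(2::nat)^d = 2^2*D" using powex 3 by blast
    obtain A where A: "(2::nat)^a = 2^2*A" using powex[OF \<open>a\<ge>2\<close>] by blast
    obtain C where C: "(2::nat)^c = 2^2*C" using powex[OF \<open>c\<ge>2\<close>] by blast
    define X where "X = r*B"
    define Y where "Y = r*D"
    have g1: "4*A + 1 = 4*X + r" using E1 A B by (simp add: X_def algebra_simps)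
    have g2: "4*C = 4*Y + r + 1" using E2 C D by (simp add: Y_def algebra_simps)
    from g1 g2 show ?thesis by presburger
  qed
qed

lemma core3_p3:
  fixes a b c d r :: nat
  assumes r2: "r \<ge> 2"
    and E1: "3^a + 1 = r*(3^b+1)" and E2: "3^c = r*(3^d+1) + 1"
    and ab: "b < a" and cd: "d < c"
  shows "a = 1 \<and> b = 0 \<and> c = 2 \<and> d = 1"
proof -
  consider "b \<ge> 1 \<and> d \<ge> 1" | "b = 0 \<and> d = 0" | "b = 0 \<and> d \<ge> 1" | "b \<ge> 1 \<and> d = 0" by linarith
  then show ?thesis
  proof cases
    case 1
    have "a \<ge> 1" "c \<ge> 1" using ab cd by auto
    obtain B where B: "(3::nat)^b = 3^1*B" using powex 1 by blast
    obtain D where D: "(3::nat)^d = 3^1*D" using powex 1 by blast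
    obtain A where A: "(3::nat)^a = 3^1*A" using powex[OF \<open>a\<ge>1\<close>] by blast
    obtain C where C: "(3::nat)^c = 3^1*C" using powex[OF \<open>c\<ge>1\<close>] by blast
    define X where "X = r*B"
    define Y where "Y = r*D"
    have g1: "3*A + 1 = 3*X + r" using E1 A B by (simp add: X_def algebra_simps)
    have g2: "3*C = 3*Y + r + 1" using E2 C D by (simp add: Y_def algebra_simps)
    from g1 g2 show ?thesis by presburger
  next
    case 2
    have "a \<ge> 1" "c \<ge> 1" using ab cd by auto
    obtain A where A: "(3::nat)^a = 3^1*A" using powex[OF \<open>a\<ge>1\<close>] by blast
    obtain C where C: "(3::nat)^c = 3^1*C" using powex[OF \<open>c\<ge>1\<close>] by blast
    have g1: "3*A + 1 = 2*r" using E1 A 2 by simp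
    have g2: "3*C = 2*r + 1" using E2 C 2 by simp
    from g1 g2 show ?thesis by presburger
  next
    case 3
    then have e1: "3^a + 1 = 2*r" using E1 by simp
    have "a \<ge> 1" using ab by simp
    show ?thesis
    proof (cases "d \<ge> 2")
      case True
      then have "c \<ge> 3" using cd by simp
      obtain D where D: "(3::nat)^d = 3^2*D" using powex[OF True] by blast
      obtain C where C: "(3::nat)^c = 3^3*C" using powex[OF \<open>c\<ge>3\<close>] by blast
      define Y where "Y = r*D"
      have g2: "27*C = 9*Y + r + 1" using E2 C D by (simp add: Y_def algebra_simps)
      show ?thesis
      proof (cases "a = 1")
        case True
        then have "r = 2" using e1 by simp
        then show ?thesis using g2 by presburger
      next
        case False
        then have "a \<ge> 2" using \<open>a\<ge>1\<close> by simp
        obtain A where A: "(3::nat)^a = 3^2*A" using powex[OF \<open>a\<ge>2\<close>] by blast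
        have "9*A + 1 = 2*r" using e1 A by simp
        then show ?thesis using g2 by presburger
      qed
    next
      case False
      then have "d = 1" using 3 by simp
      then have e2: "3^c = 4*r + 1" using E2 by simp
      show ?thesis
      proof (cases "a = 1")
        case True
        then have "r = 2" using e1 by simp
        then have "(3::nat)^c = 3^2" using e2 by simp
        then have "c = 2" using power_inject_exp[of "3::nat" c 2] by simp
        then show ?thesis using True 3 \<open>d=1\<close> by simp
      next
        case False
        then have "a \<ge> 2" using \<open>a\<ge>1\<close> by simp
        have "c \<ge> 2" using cd \<open>d=1\<close> by simp
        obtain A where A: "(3::nat)^a = 3^2*A" using powex[OF \<open>a\<ge>2\<close>] by blast
        obtain C where C: "(3::nat)^c = 3^2*C" using powex[OF \<open>c\<ge>2\<close>] by blast
        have "9*A + 1 = 2*r" using e1 A by simp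
        moreover have "9*C = 4*r + 1" using e2 C by simp
        ultimately show ?thesis by presburger
      qed
    qed
  next
    case 4
    then have e2: "3^c = 2*r + 1" using E2 by simp
    have "c \<ge> 2"
    proof (rule ccontr)
      assume "\<not> c \<ge> 2"
      then have "c = 0 \<or> c = 1" by auto
      then show False using e2 r2 by auto
    qed
    obtain C where C: "(3::nat)^c = 3^2*C" using powex[OF \<open>c\<ge>2\<close>] by blast
    have g2: "9*C = 2*r + 1" using e2 C by simp
    show ?thesis
    proof (cases "b = 1")
      case True
      then have "a \<ge> 2" using ab by simp
      obtain A where A: "(3::nat)^a = 3^2*A" using powex[OF \<open>a\<ge>2\<close>] by blast
      have "9*A + 1 = 4*r" using E1 A True by simp
      then show ?thesis using g2 by presburger
    next
      case False
      then have "b \<ge> 2" "a \<ge> 2" using 4 ab by auto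
      obtain A where A: "(3::nat)^a = 3^2*A" using powex[OF \<open>a\<ge>2\<close>] by blast
      obtain B where B: "(3::nat)^b = 3^2*B" using powex[OF \<open>b\<ge>2\<close>] by blast
      define X where "X = r*B"
      have "9*A + 1 = 9*X + r" using E1 A B by (simp add: X_def algebra_simps)
      then show ?thesis using g2 by presburger
    qed
  qed
qed

lemma psuc: fixes p k :: nat assumes "k \<ge> 1" shows "p^k = p*p^(k-1)"
  using assms by (cases k) auto

lemma core3:
  fixes p a b c d r :: nat
  assumes pr: "prime p" and p2: "p = 2 \<longrightarrow> 0<a \<and> 0<b \<and> 0<c \<and> 0<d"
    and E1: "p^a + 1 = r*(p^b+1)" and E2: "p^c = r*(p^d+1) + 1"
  shows "(p = 2 \<and> ((a = b \<and> c = 2 \<and> d = 1) \<or> (a, b, c, d) = (3, 1, 4, 2)))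
       \<or> (p = 3 \<and> ((a = b \<and> c = 1 \<and> d = 0) \<or> (a, b, c, d) = (1, 0, 2, 1)))"
proof -
  have pge: "p \<ge> 2" using pr prime_ge_2_nat by blast
  have r0: "r > 0" using E1 by (cases r) auto
  have E1': "p^a + 1 = r*p^b + r" using E1 by (simp add: algebra_simps)
  have E2': "p^c = r*p^d + r + 1" using E2 by (simp add: algebra_simps)
  show ?thesis
  proof (cases "r = 1")
    case True
    then have "p^a = p^b" using E1' by simp
    then have "a = b" using pge by simp
    have e2: "p^c = p^d + 2" using E2' True by simp
    show ?thesis
    proof (cases "d = 0")
      case True
      then have c3: "p^c = 3" using e2 by simp
      then have "c \<noteq> 0" by (metis power_0 numeral_One numeral_eq_iff semiring_norm(86))
      then have "p dvd p^c" by simp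
      then have "p dvd 3" using c3 by simp
      then have "p = 3" using dvd_small pr by auto
      then have "c = 1" using c3 power_inject_exp[of "3::nat" c 1] by simp
      then show ?thesis using \<open>p=3\<close> True \<open>a=b\<close> by simp
    next
      case False
      have "c \<noteq> 0" proof assume "c = 0" with e2 show False by simp qed
      have "p*p^(d-1) + 2 = p*p^(c-1)" using e2 psuc[of d p] psuc[of c p] False \<open>c\<noteq>0\<close> by simp
      then have "p dvd 2" by (rule dvdk)
      then have "p = 2" using dvd_small pr by auto
      with e2 have e2': "(2::nat)^c = 2^d + 2" by simp
      show ?thesis
      proof (cases "d = 1")
        case True
        then have "(2::nat)^c = 2^2" using e2' by simp
        then have "c = 2" using power_inject_exp[of "2::nat" c 2] by simp
        then show ?thesis using True \<open>p=2\<close> \<open>a=b\<close> by simp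
      next
        case False
        then have "d \<ge> 2" using \<open>d\<noteq>0\<close> by simp
        have "c \<ge> 2"
        proof (rule ccontr)
          assume "\<not> c \<ge> 2"
          then have "c = 0 \<or> c = 1" by auto
          then show False using e2' by auto
        qed
        obtain D where D: "(2::nat)^d = 2^2*D" using powex[OF \<open>d\<ge>2\<close>] by blast
        obtain C where C: "(2::nat)^c = 2^2*C" using powex[OF \<open>c\<ge>2\<close>] by blast
        have "4*C = 4*D + 2" using e2' C D by simp
        then show ?thesis by presburger
      qed
    qed
  next
    case False
    then have r2: "r \<ge> 2" using r0 by simp
    have "2*p^b \<le> r*p^b" using r2 by simp
    then have "p^b < p^a" using E1' r2 by linarith
    then have ab: "b < a" using pge by (simp add: power_strict_increasing_iff)
    have "2*p^d \<le> r*p^d" using r2 by simp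
    then have "p^d < p^c" using E2' r2 by linarith
    then have cd: "d < c" using pge by (simp add: power_strict_increasing_iff)
    have a1: "a \<ge> 1" "c \<ge> 1" using ab cd by auto
    show ?thesis
    proof (cases "p = 2")
      case True
      then have "a = 3 \<and> b = 1 \<and> c = 4 \<and> d = 2"
        using core3_p2[of a b c d r] p2 r2 E1 E2 ab cd by simp
      then show ?thesis using True by simp
    next
      case False
      have lin: "p^c + r*p^b = p^a + r*p^d + 2" using E1' E2' by linarith
      have "p = 3"
      proof -
        consider "b \<ge> 1 \<and> d \<ge> 1" | "b = 0 \<and> d = 0" | "b = 0 \<and> d \<ge> 1" | "b \<ge> 1 \<and> d = 0" by linarith
        then show ?thesis
        proof cases
          case 1
          have "p*(p^(a-1) + r*p^(d-1)) + 2 = p*(p^(c-1) + r*p^(b-1))"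
            using lin psuc[of a p] psuc[of c p] psuc[of b p] psuc[of d p] 1 a1 by (simp add: algebra_simps)
          then have "p dvd 2" by (rule dvdk)
          then show ?thesis using dvd_small pr False by auto
        next
          case 2
          have "p*p^(a-1) + 2 = p*p^(c-1)"
            using lin psuc[of a p] psuc[of c p] 2 a1 by (simp add: algebra_simps)
          then have "p dvd 2" by (rule dvdk)
          then show ?thesis using dvd_small pr False by auto
        next
          case 3
          have "2*p^c = 2*r*p^d + p^a + 3" using E1' E2' 3 by simp
          then have "p*(2*r*p^(d-1) + p^(a-1)) + 3 = p*(2*p^(c-1))"
            using psuc[of a p] psuc[of c p] psuc[of d p] 3 a1 by (simp add: algebra_simps)
          then have "p dvd 3" by (rule dvdk)
          then show ?thesis using dvd_small pr by auto
        next
          case 4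
          have "2*p^a + 3 = 2*r*p^b + p^c" using E1' E2' 4 by simp
          then have "p*(2*p^(a-1)) + 3 = p*(2*r*p^(b-1) + p^(c-1))"
            using psuc[of a p] psuc[of c p] psuc[of b p] 4 a1 by (simp add: algebra_simps)
          then have "p dvd 3" by (rule dvdk)
          then show ?thesis using dvd_small pr by auto
        qed
      qed
      then have "a = 1 \<and> b = 0 \<and> c = 2 \<and> d = 1"
        using core3_p3[of r a b c d] r2 E1 E2 ab cd by simp
      then show ?thesis using \<open>p=3\<close> by simp
    qed
  qed
qed

lemma conv2:
  fixes p A C D m n :: nat assumes "D > 0"
    "real p^m * real A = real p^n * (real C / real D)"
  shows "p^m*A*D = p^n*C"
proof -
  have "real p^m * real A * real D = real p^n * real C"
    using assms by (simp add: field_simps)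
  then show ?thesis by (metis of_nat_eq_iff of_nat_mult of_nat_power)
qed

lemma ndvd_mult: fixes p X Y :: nat assumes "prime p" "\<not> p dvd X" "\<not> p dvd Y" shows "\<not> p dvd X*Y"
  using assms prime_dvd_mult_iff by blast

lemma pos_minus: fixes p a :: nat assumes "prime p" "real p^m * ((real p^a - 1)/(real p^b+1)) > 0"
  shows "a \<ge> 1"
proof -
  have "real p^m > 0" using assms(1) prime_gt_0_nat by simp
  then have "(real p^a - 1)/(real p^b+1) > 0" by (rule zero_less_mult_pos[OF assms(2)])
  moreover have "real p^b + 1 > 0" by (simp add: add_nonneg_pos)
  ultimately have "real p^a - 1 > 0" by (smt (verit) zero_less_divide_iff)
  then have "real p^a > 1" by simp
  then show ?thesis by (cases a) auto
qed

lemma part1: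
  fixes p m n a b c d :: nat
  assumes pr: "prime p" and p2: "p = 2 \<longrightarrow> 0 < a \<and> 0 < b \<and> 0 < c \<and> 0 < d"
    and eq: "real p ^ m * ((real p ^ a + 1) / (real p ^ b + 1)) = real p ^ n * ((real p ^ c + 1) / (real p ^ d + 1))"
  shows "m = n \<and> ((a = b \<and> c = d) \<or> (a = c \<and> b = d))"
proof -
  have pge: "p \<ge> 2" using pr prime_ge_2_nat by blast
  have h: "real p ^ m * (real (p^a+1) / real (p^b+1)) = real p ^ n * (real (p^c+1) / real (p^d+1))"
    using eq by (simp only: of_nat_add of_nat_power of_nat_1)
  have "p^m*(p^a+1)*(p^d+1) = p^n*(p^c+1)*(p^b+1)" by (rule conv[OF _ _ h]) simp_all
  then have e: "p^m*((p^a+1)*(p^d+1)) = p^n*((p^c+1)*(p^b+1))" by (simp only: mult.assoc)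
  have nd: "\<not> p dvd p^x + 1" if "x \<in> {a,b,c,d}" for x
    using coprime_pow_plus1[OF pr] p2 that by auto
  have X: "\<not> p dvd (p^a+1)*(p^d+1)" by (rule ndvd_mult[OF pr]; rule nd; simp)
  have Y: "\<not> p dvd (p^c+1)*(p^b+1)" by (rule ndvd_mult[OF pr]; rule nd; simp)
  have "m = n" using exp_eq[OF pr e X Y] .
  then have e2: "(p^a+1)*(p^d+1) = (p^c+1)*(p^b+1)" using e pge by simp
  have "(a = b \<and> c = d) \<or> (a = c \<and> b = d)"
  proof -
    consider "d \<le> a \<and> b \<le> c" | "a \<le> d \<and> b \<le> c" | "d \<le> a \<and> c \<le> b" | "a \<le> d \<and> c \<le> b" by linarith
    then show ?thesis
    proof cases
      case 1 then show ?thesis using core1'[OF pr _ _ e2] by simp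
    next
      case 2
      have "(p^d+1)*(p^a+1) = (p^c+1)*(p^b+1)" using e2 by (metis mult.commute)
      from core1'[OF pr _ _ this] 2 show ?thesis by auto
    next
      case 3
      have "(p^a+1)*(p^d+1) = (p^b+1)*(p^c+1)" using e2 by (metis mult.commute)
      from core1'[OF pr _ _ this] 3 show ?thesis by auto
    next
      case 4
      have "(p^d+1)*(p^a+1) = (p^b+1)*(p^c+1)" using e2 by (metis mult.commute)
      from core1'[OF pr _ _ this] 4 show ?thesis by auto
    qed
  qed
  then show ?thesis using \<open>m=n\<close> by simp
qed

lemma real_pm1: fixes p a :: nat assumes "prime p" shows "real (p^a - 1) = real p^a - 1"
proof -
  have "1 \<le> p^a" using assms prime_gt_0_nat by (simp add: Suc_leI)
  then show ?thesis by (simp add: of_nat_diff)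
qed

lemma part2:
  fixes p m n a b c d :: nat
  assumes pr: "prime p" and p2: "p = 2 \<longrightarrow> 0 < a \<and> 0 < b \<and> 0 < c \<and> 0 < d"
    and eq: "real p ^ m * ((real p ^ a - 1) / (real p ^ b + 1)) = real p ^ n * ((real p ^ c - 1) / (real p ^ d + 1))"
    and int: "real p ^ m * ((real p ^ a - 1) / (real p ^ b + 1)) \<in> \<int>"
    and pos: "real p ^ m * ((real p ^ a - 1) / (real p ^ b + 1)) > 0"
  shows "m = n \<and> a = c \<and> b = d"
proof -
  have pge: "p \<ge> 2" using pr prime_ge_2_nat by blast
  have a1: "a \<ge> 1" using pos_minus[OF pr pos] .
  have c1: "c \<ge> 1" using pos_minus[OF pr, of n c d] pos eq by simp
  have h: "real p ^ m * (real (p^a-1) / real (p^b+1)) = real p ^ n * (real (p^c-1) / real (p^d+1))"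
    using eq by (simp only: real_pm1[OF pr] of_nat_add of_nat_power of_nat_1)
  have hi: "real p ^ m * (real (p^a-1) / real (p^b+1)) \<in> \<int>"
    using int by (simp only: real_pm1[OF pr] of_nat_add of_nat_power of_nat_1)
  have "p^m*(p^a-1)*(p^d+1) = p^n*(p^c-1)*(p^b+1)" by (rule conv[OF _ _ h]) simp_all
  then have e: "p^m*((p^a-1)*(p^d+1)) = p^n*((p^c-1)*(p^b+1))" by (simp only: mult.assoc)
  have X: "\<not> p dvd (p^a-1)*(p^d+1)"
    by (rule ndvd_mult[OF pr coprime_pow_minus1[OF pr a1] coprime_pow_plus1[OF pr]]) (use p2 in auto)
  have Y: "\<not> p dvd (p^c-1)*(p^b+1)"
    by (rule ndvd_mult[OF pr coprime_pow_minus1[OF pr c1] coprime_pow_plus1[OF pr]]) (use p2 in auto)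
  have "m = n" using exp_eq[OF pr e X Y] .
  then have e2: "(p^a-1)*(p^d+1) = (p^c-1)*(p^b+1)" using e pge by simp
  have "p^b+1 dvd p^a-1" by (rule intdiv[OF pr coprime_pow_plus1[OF pr] _ hi]) (use p2 in auto)
  then obtain r where r: "p^a - 1 = (p^b+1)*r" by blast
  have "p^a \<ge> p^1" using a1 pge by (intro power_increasing) auto
  then have "p^a \<ge> p" by simp
  then have r0: "r > 0" using r pge by (cases r) auto
  have "((p^b+1)*r)*(p^d+1) = (p^c-1)*(p^b+1)" using e2 by (simp only: r)
  then have "(p^b+1)*(r*(p^d+1)) = (p^b+1)*(p^c-1)" by (simp only: ac_simps)
  then have "r*(p^d+1) = p^c - 1" by (rule cancelP[rotated]) simp
  then have rc: "p^c - 1 = r*(p^d+1)" by simp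
  have pa1: "p^a \<ge> 1" "p^c \<ge> 1" using pge by simp_all
  have ea: "p^a = r*(p^b+1)+1" using r pa1 by (simp add: algebra_simps)
  have ec: "p^c = r*(p^d+1)+1" using rc pa1 by (simp add: algebra_simps)
  consider "b < d" | "d < b" | "b = d" by linarith
  then have "a = c \<and> b = d"
  proof cases
    case 1 then show ?thesis using L2[OF pr r0 ea ec] by simp
  next
    case 2 then show ?thesis using L2[OF pr r0 ec ea] by simp
  next
    case 3
    then have "p^a = p^c" using ea ec by simp
    then show ?thesis using 3 pge by simp
  qed
  then show ?thesis using \<open>m=n\<close> by simp
qed


lemma part3:
  fixes p m n a b c d :: nat
  assumes pr: "prime p" and p2: "p = 2 \<longrightarrow> 0 < a \<and> 0 < b \<and> 0 < c \<and> 0 < d"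
    and eq: "real p ^ m * ((real p ^ a + 1) / (real p ^ b + 1)) = real p ^ n * ((real p ^ c - 1) / (real p ^ d + 1))"
    and int: "real p ^ m * ((real p ^ a + 1) / (real p ^ b + 1)) \<in> \<int>"
    and pos: "real p ^ m * ((real p ^ a + 1) / (real p ^ b + 1)) > 0"
  shows "m = n \<and>
        ((p = 2 \<and> ((a = b \<and> c = 2 \<and> d = 1) \<or> (a, b, c, d) = (3, 1, 4, 2)))
       \<or> (p = 3 \<and> ((a = b \<and> c = 1 \<and> d = 0) \<or> (a, b, c, d) = (1, 0, 2, 1))))"
proof -
  have pge: "p \<ge> 2" using pr prime_ge_2_nat by blast
  have c1: "c \<ge> 1" using pos_minus[OF pr, of n c d] pos eq by simp
  have h: "real p ^ m * (real (p^a+1) / real (p^b+1)) = real p ^ n * (real (p^c-1) / real (p^d+1))"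
    using eq by (simp only: real_pm1[OF pr] of_nat_add of_nat_power of_nat_1)
  have hi: "real p ^ m * (real (p^a+1) / real (p^b+1)) \<in> \<int>"
    using int by (simp only: of_nat_add of_nat_power of_nat_1)
  have "p^m*(p^a+1)*(p^d+1) = p^n*(p^c-1)*(p^b+1)" by (rule conv[OF _ _ h]) simp_all
  then have e: "p^m*((p^a+1)*(p^d+1)) = p^n*((p^c-1)*(p^b+1))" by (simp only: mult.assoc)
  have X: "\<not> p dvd (p^a+1)*(p^d+1)"
    by (rule ndvd_mult[OF pr coprime_pow_plus1[OF pr] coprime_pow_plus1[OF pr]]) (use p2 in auto)
  have Y: "\<not> p dvd (p^c-1)*(p^b+1)"
    by (rule ndvd_mult[OF pr coprime_pow_minus1[OF pr c1] coprime_pow_plus1[OF pr]]) (use p2 in auto)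
  have "m = n" using exp_eq[OF pr e X Y] .
  then have "p^n*((p^a+1)*(p^d+1)) = p^n*((p^c-1)*(p^b+1))" using e by (simp only:)
  then have e2: "(p^a+1)*(p^d+1) = (p^c-1)*(p^b+1)" by (rule cancelP[rotated]) (use pge in simp)
  have "p^b+1 dvd p^a+1" by (rule intdiv[OF pr coprime_pow_plus1[OF pr] _ hi]) (use p2 in auto)
  then obtain r where r: "p^a + 1 = (p^b+1)*r" by blast
  have "((p^b+1)*r)*(p^d+1) = (p^c-1)*(p^b+1)" using e2 by (simp only: r)
  then have "(p^b+1)*(r*(p^d+1)) = (p^b+1)*(p^c-1)" by (simp only: ac_simps)
  then have "r*(p^d+1) = p^c - 1" by (rule cancelP[rotated]) simp
  moreover have "p^c \<ge> 1" using pge by simp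
  ultimately have E2: "p^c = r*(p^d+1)+1" by simp
  have E1: "p^a + 1 = r*(p^b+1)" using r by (simp add: mult.commute)
  show ?thesis using core3[OF pr p2 E1 E2] \<open>m=n\<close> by simp
qed

lemma part4:
  fixes p m n a b c d :: nat
  assumes pr: "prime p" and p2: "p = 2 \<longrightarrow> 0 < a \<and> 0 < b \<and> 0 < c \<and> 0 < d"
    and eq: "real p ^ m * (real p ^ a + 1) = real p ^ n * ((real p ^ c + 1) / (real p ^ d + 1))"
  shows "m = n \<and> ((p = 3 \<and> (a, c, d) = (0, 1, 0)) \<or> (p = 2 \<and> (a, c, d) = (1, 3, 1)))"
proof -
  have pge: "p \<ge> 2" using pr prime_ge_2_nat by blast
  have h: "real p ^ m * real (p^a+1) = real p ^ n * (real (p^c+1) / real (p^d+1))"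
    using eq by (simp only: of_nat_add of_nat_power of_nat_1)
  have "p^m*(p^a+1)*(p^d+1) = p^n*(p^c+1)" by (rule conv2[OF _ h]) simp
  then have e: "p^m*((p^a+1)*(p^d+1)) = p^n*(p^c+1)" by (simp only: mult.assoc)
  have X: "\<not> p dvd (p^a+1)*(p^d+1)"
    by (rule ndvd_mult[OF pr coprime_pow_plus1[OF pr] coprime_pow_plus1[OF pr]]) (use p2 in auto)
  have Y: "\<not> p dvd (p^c+1)" by (rule coprime_pow_plus1[OF pr]) (use p2 in auto)
  have "m = n" using exp_eq[OF pr e X Y] .
  then have "p^n*((p^a+1)*(p^d+1)) = p^n*(p^c+1)" using e by (simp only:)
  then have e2: "(p^a+1)*(p^d+1) = p^c+1" by (rule cancelP[rotated]) (use pge in simp)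
  have "(p=3 \<and> a=0 \<and> c=1 \<and> d=0) \<or> (p=2 \<and> a=1 \<and> c=3 \<and> d=1)"
  proof (cases "a \<le> d")
    case True then show ?thesis using core4'[OF pr _ True e2] p2 by simp
  next
    case False
    have "(p^d+1)*(p^a+1) = p^c+1" using e2 by (simp only: ac_simps)
    from core4'[OF pr _ _ this] False p2 show ?thesis by auto
  qed
  then show ?thesis using \<open>m=n\<close> by auto
qed

lemma part5:
  fixes p m n a b c d :: nat
  assumes pr: "prime p" and p2: "p = 2 \<longrightarrow> 0 < a \<and> 0 < b \<and> 0 < c \<and> 0 < d"
    and eq: "real p ^ m * (real p ^ a + 1) = real p ^ n * ((real p ^ c - 1) / (real p ^ d + 1))"
    and pos: "real p ^ m * (real p ^ a + 1) > 0"
  shows "m = n \<and>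
        ((p = 5 \<and> (a, c, d) = (0, 1, 0))
       \<or> (p = 3 \<and> (a, c, d) \<in> {(0, 2, 1), (1, 2, 0)})
       \<or> (p = 2 \<and> (a, c, d) \<in> {(1, 4, 2), (2, 4, 1)}))"
proof -
  have pge: "p \<ge> 2" using pr prime_ge_2_nat by blast
  have c1: "c \<ge> 1" using pos_minus[OF pr, of n c d] pos eq by simp
  have h: "real p ^ m * real (p^a+1) = real p ^ n * (real (p^c-1) / real (p^d+1))"
    using eq by (simp only: real_pm1[OF pr] of_nat_add of_nat_power of_nat_1)
  have "p^m*(p^a+1)*(p^d+1) = p^n*(p^c-1)" by (rule conv2[OF _ h]) simp
  then have e: "p^m*((p^a+1)*(p^d+1)) = p^n*(p^c-1)" by (simp only: mult.assoc)
  have X: "\<not> p dvd (p^a+1)*(p^d+1)"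
    by (rule ndvd_mult[OF pr coprime_pow_plus1[OF pr] coprime_pow_plus1[OF pr]]) (use p2 in auto)
  have Y: "\<not> p dvd (p^c-1)" by (rule coprime_pow_minus1[OF pr c1])
  have "m = n" using exp_eq[OF pr e X Y] .
  then have "p^n*((p^a+1)*(p^d+1)) = p^n*(p^c-1)" using e by (simp only:)
  then have "(p^a+1)*(p^d+1) = p^c-1" by (rule cancelP[rotated]) (use pge in simp)
  moreover have "p^c \<ge> 1" using pge by simp
  ultimately have e2: "(p^a+1)*(p^d+1) + 1 = p^c" by simp
  have "(p=5 \<and> a=0 \<and> c=1 \<and> d=0) \<or> (p=3 \<and> ((a=0 \<and> c=2 \<and> d=1) \<or> (a=1 \<and> c=2 \<and> d=0)))
      \<or> (p=2 \<and> ((a=1 \<and> c=4 \<and> d=2) \<or> (a=2 \<and> c=4 \<and> d=1)))"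
  proof (cases "a \<le> d")
    case True then show ?thesis using core5'[OF pr _ True e2] p2 by auto
  next
    case False
    have "(p^d+1)*(p^a+1) + 1 = p^c" using e2 by (simp only: ac_simps)
    from core5'[OF pr _ _ this] False p2 show ?thesis by auto
  qed
  then show ?thesis using \<open>m=n\<close> by auto
qed

theorem mainTheorem11:
  fixes p m n a b c d :: nat
  assumes "prime p"
    and "p = 2 \<longrightarrow> 0 < a \<and> 0 < b \<and> 0 < c \<and> 0 < d"
  shows
   "(real p ^ m * ((real p ^ a + 1) / (real p ^ b + 1)) = real p ^ n * ((real p ^ c + 1) / (real p ^ d + 1))
     \<and> real p ^ m * ((real p ^ a + 1) / (real p ^ b + 1)) \<in> \<int>
     \<and> real p ^ m * ((real p ^ a + 1) / (real p ^ b + 1)) > 0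
     \<longrightarrow> m = n \<and> ((a = b \<and> c = d) \<or> (a = c \<and> b = d)))
  \<and> (real p ^ m * ((real p ^ a - 1) / (real p ^ b + 1)) = real p ^ n * ((real p ^ c - 1) / (real p ^ d + 1))
     \<and> real p ^ m * ((real p ^ a - 1) / (real p ^ b + 1)) \<in> \<int>
     \<and> real p ^ m * ((real p ^ a - 1) / (real p ^ b + 1)) > 0
     \<longrightarrow> m = n \<and> a = c \<and> b = d)
  \<and> (real p ^ m * ((real p ^ a + 1) / (real p ^ b + 1)) = real p ^ n * ((real p ^ c - 1) / (real p ^ d + 1))
     \<and> real p ^ m * ((real p ^ a + 1) / (real p ^ b + 1)) \<in> \<int>
     \<and> real p ^ m * ((real p ^ a + 1) / (real p ^ b + 1)) > 0
     \<longrightarrow> m = n \<and>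
        ((p = 2 \<and> ((a = b \<and> c = 2 \<and> d = 1) \<or> (a, b, c, d) = (3, 1, 4, 2)))
       \<or> (p = 3 \<and> ((a = b \<and> c = 1 \<and> d = 0) \<or> (a, b, c, d) = (1, 0, 2, 1)))))
  \<and> (real p ^ m * (real p ^ a + 1) = real p ^ n * ((real p ^ c + 1) / (real p ^ d + 1))
     \<and> real p ^ m * (real p ^ a + 1) \<in> \<int>
     \<and> real p ^ m * (real p ^ a + 1) > 0
     \<longrightarrow> m = n \<and>
        ((p = 3 \<and> (a, c, d) = (0, 1, 0)) \<or> (p = 2 \<and> (a, c, d) = (1, 3, 1))))
  \<and> (real p ^ m * (real p ^ a + 1) = real p ^ n * ((real p ^ c - 1) / (real p ^ d + 1))
     \<and> real p ^ m * (real p ^ a + 1) \<in> \<int>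
     \<and> real p ^ m * (real p ^ a + 1) > 0
     \<longrightarrow> m = n \<and>
        ((p = 5 \<and> (a, c, d) = (0, 1, 0))
       \<or> (p = 3 \<and> (a, c, d) \<in> {(0, 2, 1), (1, 2, 0)})
       \<or> (p = 2 \<and> (a, c, d) \<in> {(1, 4, 2), (2, 4, 1)})))"
    apply (rule conjI)
   apply (rule impI, elim conjE, rule part1[OF assms]; assumption)
  apply (rule conjI)
   apply (rule impI, elim conjE, rule part2[OF assms]; assumption)
  apply (rule conjI)
   apply (rule impI, elim conjE, rule part3[OF assms]; assumption)
  apply (rule conjI)
   apply (rule impI, elim conjE, rule part4[OF assms]; assumption)
  apply (rule impI, elim conjE, rule part5[OF assms]; assumption)
  done

end
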